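(* There exists a unique multiplicative trivialization $\varrho_{\mathrm{can}}=(1_t)_{t\in T^{(A)}}$ of $\mathcal{L}\mathrm{og}$ over $T^{(A)}$. It is compatible with isogenies, and for $t\in T[N]$ with $N$ invertible in $A$, $1_t$ is given by the isomorphism \[ t^*\mathcal{L}\mathrm{og}\cong t^*[N]^*\mathcal{L}\mathrm{og}\cong0^*[N]^*\mathcal{L}\mathrm{og}\cong0^*\mathcal{L}\mathrm{og} \] (sending $1_t$ to $\mathbf{1}$). Here the outer isomorphisms are the pull-backs of $[N]_{\mathcal{L}\mathrm{og}}$, and the middle one comes from $[N]\circ t=[N]\circ0$.
   Context: Let $A$ be a commutative ring and $L$ a free abelian group of rank $n$. Let $R$ be the completion of the group ring $A[L]$ (basis $\delta_\ell$) at its augmentation ideal $J$, and $I=JR$. Let $V=\mathbb{R}\otimes L$, $T=V/L$, $\pi:V\to T$. The logarithm sheaf $\mathcal{L}\mathrm{og}$ is the local system on $T$ whose sections over $U$ are the locally constant $f:\pi^{-1}(U)\to R$ with $f(v+\ell)=\delta_\ell^{-1}f(v)$; its stalk at $0$ is $R$ with generator $\mathbf 1=1$, and $\mathcal{L}\mathrm{og}/I\mathcal{L}\mathrm{og}=\underline A$. Functoriality: for a homomorphism $\varphi:L\to L'$ the induced continuous map $\varphi_R:R(L)\to R(L')$, $\delta_\ell\mapsto\delta_{\varphi(\ell)}$, gives a morphism of local systems $\varphi_{\mathcal{L}\mathrm{og}}:\mathcal{L}\mathrm{og}_T\to\varphi^*\mathcal{L}\mathrm{og}_{T'}$ preserving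 $\mathbf 1$. It is an isomorphism if $\varphi$ is an isogeny (injective with finite cokernel) whose degree $\#(L'/\varphi(L))$ is invertible in $A$. $[N]$ denotes multiplication by $N$ on $L$ and $T$. There is a unique isomorphism $\mathrm{pr}_1^*\mathcal{L}\mathrm{og}\otimes_{\underline R}\mathrm{pr}_2^*\mathcal{L}\mathrm{og}\cong+^*\mathcal{L}\mathrm{og}$ on $T\times T$ sending $\mathbf1\otimes\mathbf1$ to $\mathbf1$. A multiplicative trivialization over a subgroup $H\subset T$ is a family of generators $1_h\in\mathcal{L}\mathrm{og}_h$ ($h\in H$) with $1_h\equiv1\bmod I\mathcal{L}\mathrm{og}_h$ and $1_h\otimes1_{h'}\mapsto1_{h+h'}$ under this isomorphism. $T^{(A)}$ is the subgroup of torsion points of $T$ whose order is invertible in $A$. Compatibility with an isogeny $\varphi$ of degree invertible in $A$ means that $\varphi_{\mathcal{L}\mathrm{og}}$ maps $1_t$ to $1'_{\varphi(t)}$. *)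

theory Defs
  imports "HOL-Analysis.Analysis" "HOL-Library.Poly_Mapping"
begin

type_synonym ('l, 'a) grpring = "'l \<Rightarrow>\<^sub>0 'a"

definition delta :: "'l \<Rightarrow> ('l::ab_group_add, 'a::comm_ring_1) grpring" where
  "delta l = Poly_Mapping.single l 1"

definition aug :: "('l::ab_group_add, 'a::comm_ring_1) grpring \<Rightarrow> 'a" where
  "aug x = (\<Sum>l\<in>Poly_Mapping.keys x. Poly_Mapping.lookup x l)"

definition augJ :: "('l::ab_group_add, 'a::comm_ring_1) grpring set" where
  "augJ = {x. aug x = 0}"

inductive Jmem :: "nat \<Rightarrow> ('l::ab_group_add, 'a::comm_ring_1) grpring \<Rightarrow> bool" where
  Jmem0: "Jmem 0 x"
| JmemZ: "Jmem k 0"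
| JmemM: "a \<in> augJ \<Longrightarrow> Jmem m b \<Longrightarrow> Jmem (Suc m) (a * b)"
| JmemA: "Jmem k x \<Longrightarrow> Jmem k y \<Longrightarrow> Jmem k (x + y)"
| JmemS: "Jmem k x \<Longrightarrow> Jmem k (r * x)"

definition Jpow :: "nat \<Rightarrow> ('l::ab_group_add, 'a::comm_ring_1) grpring set" where
  "Jpow k = {x. Jmem k x}"

text \<open>An element of R is represented by a compatible sequence (s_k) with
s_k in A[L] read modulo J^k and s_(k+1) = s_k mod J^k; two representatives
define the same element of R iff they agree modulo J^k for all k.\<close>

type_synonym ('l, 'a) compl = "nat \<Rightarrow> ('l, 'a) grpring"

definition cvalid :: "('l::ab_group_add, 'a::comm_ring_1) compl \<Rightarrow> bool" where
  "cvalid s \<longleftrightarrow> (\<forall>k. s (Suc k) - s k \<in> Jpow k)"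

definition ceq :: "('l::ab_group_add, 'a::comm_ring_1) compl \<Rightarrow> ('l, 'a) compl \<Rightarrow> bool"
  (infix "\<approx>" 50) where
  "s \<approx> t \<longleftrightarrow> (\<forall>k. s k - t k \<in> Jpow k)"

definition cemb :: "('l::ab_group_add, 'a::comm_ring_1) grpring \<Rightarrow> ('l, 'a) compl" where
  "cemb x = (\<lambda>k. x)"

definition cadd :: "('l::ab_group_add, 'a::comm_ring_1) compl \<Rightarrow> ('l, 'a) compl \<Rightarrow> ('l, 'a) compl" where
  "cadd s t = (\<lambda>k. s k + t k)"

definition cdiff :: "('l::ab_group_add, 'a::comm_ring_1) compl \<Rightarrow> ('l, 'a) compl \<Rightarrow> ('l, 'a) compl" where
  "cdiff s t = (\<lambda>k. s k - t k)"

definition cmul :: "('l::ab_group_add, 'a::comm_ring_1) compl \<Rightarrow> ('l, 'a) compl \<Rightarrow> ('l, 'a) compl" where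
  "cmul s t = (\<lambda>k. s k * t k)"

definition cone :: "('l::ab_group_add, 'a::comm_ring_1) compl" where
  "cone = cemb 1"

definition cunit :: "('l::ab_group_add, 'a::comm_ring_1) compl \<Rightarrow> bool" where
  "cunit s \<longleftrightarrow> (\<exists>u. cvalid u \<and> cmul u s \<approx> cone)"

definition inI :: "('l::ab_group_add, 'a::comm_ring_1) compl \<Rightarrow> bool" where
  "inI s \<longleftrightarrow> (\<exists>js rs. length js = length rs \<and> set js \<subseteq> augJ \<and> (\<forall>r\<in>set rs. cvalid r) \<and>
      s \<approx> (\<lambda>k. \<Sum>i<length js. js ! i * (rs ! i) k))"

definition phiA :: "('l::ab_group_add \<Rightarrow> 'm::ab_group_add) \<Rightarrow> ('l, 'a::comm_ring_1) grpring \<Rightarrow> ('m, 'a) grpring" where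
  "phiA f x = (\<Sum>l\<in>Poly_Mapping.keys x. Poly_Mapping.single (f l) (Poly_Mapping.lookup x l))"

definition phiR :: "('l::ab_group_add \<Rightarrow> 'm::ab_group_add) \<Rightarrow> ('l, 'a::comm_ring_1) compl \<Rightarrow> ('m, 'a) compl" where
  "phiR f s = (\<lambda>k. phiA f (s k))"

section \<open>Lattice L = Z^n, V = R (x) L = R^n, torus T = V/L\<close>

definition ivec :: "int ^ 'n \<Rightarrow> real ^ 'n" where
  "ivec l = (\<chi> i. of_int (l $ i))"

definition inL :: "real ^ 'n \<Rightarrow> bool" where
  "inL v \<longleftrightarrow> (\<exists>l. v = ivec l)"

definition tord :: "real ^ 'n \<Rightarrow> nat" where
  "tord v = (LEAST N. N > 0 \<and> inL (real N *\<^sub>R v))"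

definition unitA :: "'a::comm_ring_1 \<Rightarrow> bool" where
  "unitA x \<longleftrightarrow> (\<exists>y. x * y = 1)"

definition TA :: "'a::comm_ring_1 itself \<Rightarrow> real ^ 'n \<Rightarrow> bool" where
  "TA _ v \<longleftrightarrow> (\<exists>N>0. inL (real N *\<^sub>R v)) \<and> unitA (of_nat (tord v) :: 'a)"

definition phiV :: "(int ^ 'n \<Rightarrow> int ^ 'm) \<Rightarrow> real ^ 'n \<Rightarrow> real ^ 'm" where
  "phiV f v = (\<Sum>i\<in>UNIV. (v $ i) *\<^sub>R ivec (f (axis i 1)))"

text \<open>The stalk of Log at pi(v) is the rank one free R-module of functions f on the
fibre v + L with f(v + l) = delta_l^{-1} f(v).  A family (1_t) of elements of the
stalks over a subset of T is thus encoded by one function g on V (only its values on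
the fibres over that subset matter).  Under the tensor isomorphism,
f (x) f' corresponds to (v + w \<mapsto> f(v) f'(w)); f generates the stalk iff f(v) is a
unit of R; and f = 1 mod I Log iff f(v) - 1 \<in> I.\<close>

definition mult_triv :: "'a::comm_ring_1 itself \<Rightarrow> (real ^ 'n \<Rightarrow> (int ^ 'n, 'a) compl) \<Rightarrow> bool" where
  "mult_triv A g \<longleftrightarrow>
     (\<forall>v. TA A v \<longrightarrow> cvalid (g v) \<and> cunit (g v) \<and> inI (cdiff (g v) cone)) \<and>
     (\<forall>v l. TA A v \<longrightarrow> g (v + ivec l) \<approx> cmul (cemb (delta (- l))) (g v)) \<and>
     (\<forall>v w. TA A v \<longrightarrow> TA A w \<longrightarrow> g (v + w) \<approx> cmul (g v) (g w))"

definition isogeny :: "(int ^ 'n \<Rightarrow> int ^ 'm) \<Rightarrow> bool" where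
  "isogeny f \<longleftrightarrow> (\<forall>x y. f (x + y) = f x + f y) \<and> inj f \<and>
     finite {{x + f y | y. True} | x. True}"

definition isog_deg :: "(int ^ 'n \<Rightarrow> int ^ 'm) \<Rightarrow> nat" where
  "isog_deg f = card {{x + f y | y. True} | x. True}"

end

theory Submission
  imports Defs
begin


lemma Jpow_zero[simp]: "0 \<in> Jpow k" by (simp add: Jpow_def JmemZ)
lemma Jpow_0[simp]: "x \<in> Jpow 0" by (simp add: Jpow_def Jmem0)
lemma Jpow_add: "x \<in> Jpow k \<Longrightarrow> y \<in> Jpow k \<Longrightarrow> x + y \<in> Jpow k"
  by (simp add: Jpow_def JmemA)
lemma Jpow_multL: "x \<in> Jpow k \<Longrightarrow> r * x \<in> Jpow k"
  by (simp add: Jpow_def JmemS)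
lemma Jpow_multR: "x \<in> Jpow k \<Longrightarrow> x * r \<in> Jpow k"
  by (metis Jpow_multL mult.commute)
lemma Jpow_uminus: "x \<in> Jpow k \<Longrightarrow> - x \<in> Jpow k"
  using Jpow_multL[of x k "-1"] by simp
lemma Jpow_diff: "x \<in> Jpow k \<Longrightarrow> y \<in> Jpow k \<Longrightarrow> x - y \<in> Jpow k"
  using Jpow_add[of x k "-y"] Jpow_uminus by fastforce
lemma Jpow_sum: "(\<And>i. i \<in> S \<Longrightarrow> f i \<in> Jpow k) \<Longrightarrow> sum f S \<in> Jpow k"
  by (induction S rule: infinite_finite_induct) (auto intro: Jpow_add)

lemma Jmem_mono_aux: "Jmem k x \<Longrightarrow> k = Suc m \<Longrightarrow> Jmem m x"
proof (induction arbitrary: m rule: Jmem.induct)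
  case (JmemM a m' b) then show ?case by (simp add: JmemS)
qed (auto intro: Jmem.intros)

lemma Jpow_Suc: "x \<in> Jpow (Suc m) \<Longrightarrow> x \<in> Jpow m"
  using Jmem_mono_aux by (auto simp: Jpow_def)

lemma Jpow_mono: "m \<le> k \<Longrightarrow> x \<in> Jpow k \<Longrightarrow> x \<in> Jpow m"
proof (induction k)
  case (Suc k) then show ?case using Jpow_Suc le_Suc_eq by blast
qed simp

lemma Jmem_mult_aux: "Jmem a x \<Longrightarrow> Jmem b y \<Longrightarrow> Jmem (a + b) (x * y)"
proof (induction rule: Jmem.induct)
  case (Jmem0 x) then show ?case by (simp add: JmemS)
next
  case (JmemZ k) then show ?case by (simp add: Jmem.JmemZ)
next
  case (JmemM a m b')
  then have "Jmem (Suc (m + b)) (a * (b' * y))" by (simp add: Jmem.JmemM)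
  then show ?case by (simp add: mult.assoc)
next
  case (JmemA k x1 x2) then show ?case by (simp add: distrib_right Jmem.JmemA)
next
  case (JmemS k x r) then show ?case by (simp add: mult.assoc Jmem.JmemS)
qed

lemma Jpow_mult: "x \<in> Jpow a \<Longrightarrow> y \<in> Jpow b \<Longrightarrow> x * y \<in> Jpow (a + b)"
  by (simp add: Jpow_def Jmem_mult_aux)

lemma augJ_Jpow1: "x \<in> augJ \<Longrightarrow> x \<in> Jpow 1"
proof -
  assume "x \<in> augJ"
  then have "Jmem (Suc 0) (x * 1)" by (intro JmemM Jmem0)
  then show ?thesis by (simp add: Jpow_def)
qed

lemma augJ_mult: "x \<in> augJ \<Longrightarrow> y \<in> Jpow m \<Longrightarrow> x * y \<in> Jpow (Suc m)"
  using Jpow_mult[OF augJ_Jpow1] by fastforce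

lemma power_diff_Jpow: "x - y \<in> Jpow k \<Longrightarrow> x ^ n - y ^ n \<in> Jpow k"
proof -
  assume "x - y \<in> Jpow k"
  then have "(x - y) * (\<Sum>i<n. y ^ (n - Suc i) * x ^ i) \<in> Jpow k" by (rule Jpow_multR)
  then show ?thesis by (simp add: power_diff_sumr2)
qed

lemma pm_expand_sup:
  fixes x :: "'k \<Rightarrow>\<^sub>0 'b::comm_monoid_add"
  assumes "finite S" "Poly_Mapping.keys x \<subseteq> S"
  shows "x = (\<Sum>k\<in>S. Poly_Mapping.single k (Poly_Mapping.lookup x k))"
proof (rule poly_mapping_eqI)
  fix j
  have "Poly_Mapping.lookup (\<Sum>k\<in>S. Poly_Mapping.single k (Poly_Mapping.lookup x k)) j
     = (\<Sum>k\<in>S. (Poly_Mapping.lookup x k when k = j))"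
    by (simp add: lookup_sum lookup_single)
  also have "\<dots> = Poly_Mapping.lookup x j"
  proof (cases "j \<in> S")
    case True
    then show ?thesis using assms(1) by (simp add: when_def sum.delta)
  next
    case False
    then have "j \<notin> Poly_Mapping.keys x" using assms by auto
    then show ?thesis using False by (auto simp: when_def in_keys_iff intro!: sum.neutral)
  qed
  finally show "Poly_Mapping.lookup x j = Poly_Mapping.lookup (\<Sum>k\<in>S. Poly_Mapping.single k (Poly_Mapping.lookup x k)) j" ..
qed

lemma pm_induct[case_names single add]:
  fixes x :: "'k \<Rightarrow>\<^sub>0 'b::comm_monoid_add"
  assumes S: "\<And>k a. P (Poly_Mapping.single k a)"
    and A: "\<And>a b. P a \<Longrightarrow> P b \<Longrightarrow> P (a + b)"
  shows "P x"
proof -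
  have z: "P 0" using S[of undefined 0] by simp
  have "P (\<Sum>k\<in>T. Poly_Mapping.single k (Poly_Mapping.lookup x k))" if "finite T" for T
    using that by (induction T rule: finite_induct) (auto simp: z S A)
  then show ?thesis using pm_expand_sup[of "Poly_Mapping.keys x" x] by (metis finite_keys order_refl)
qed

lemma phiA_sup:
  assumes "finite S" "Poly_Mapping.keys x \<subseteq> S"
  shows "phiA f x = (\<Sum>l\<in>S. Poly_Mapping.single (f l) (Poly_Mapping.lookup x l))"
  unfolding phiA_def using assms
  by (intro sum.mono_neutral_left) (auto simp: in_keys_iff)

lemma aug_sup:
  assumes "finite S" "Poly_Mapping.keys x \<subseteq> S"
  shows "aug x = (\<Sum>l\<in>S. Poly_Mapping.lookup x l)"
  unfolding aug_def using assms
  by (intro sum.mono_neutral_left) (auto simp: in_keys_iff)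

lemma phiA_add: "phiA f (x + y) = phiA f x + phiA f y"
proof -
  let ?S = "Poly_Mapping.keys x \<union> Poly_Mapping.keys y"
  have "phiA f (x + y) = (\<Sum>l\<in>?S. Poly_Mapping.single (f l) (Poly_Mapping.lookup (x+y) l))"
    by (rule phiA_sup) (auto simp: keys_add)
  also have "\<dots> = (\<Sum>l\<in>?S. Poly_Mapping.single (f l) (Poly_Mapping.lookup x l))
     + (\<Sum>l\<in>?S. Poly_Mapping.single (f l) (Poly_Mapping.lookup y l))"
    by (simp add: lookup_add single_add sum.distrib)
  also have "\<dots> = phiA f x + phiA f y"
    by (subst (1 2) phiA_sup[of ?S]) auto
  finally show ?thesis .
qed

lemma aug_add: "aug (x + y) = aug x + aug y"
proof -
  let ?S = "Poly_Mapping.keys x \<union> Poly_Mapping.keys y"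
  have "aug (x + y) = (\<Sum>l\<in>?S. Poly_Mapping.lookup (x+y) l)"
    by (rule aug_sup) (auto simp: keys_add)
  also have "\<dots> = (\<Sum>l\<in>?S. Poly_Mapping.lookup x l) + (\<Sum>l\<in>?S. Poly_Mapping.lookup y l)"
    by (simp add: lookup_add sum.distrib)
  also have "\<dots> = aug x + aug y"
    by (subst (1 2) aug_sup[of ?S]) auto
  finally show ?thesis .
qed

lemma phiA_single[simp]: "phiA f (Poly_Mapping.single k a) = Poly_Mapping.single (f k) a"
  by (subst phiA_sup[of "{k}"]) auto

lemma aug_single[simp]: "aug (Poly_Mapping.single k a) = a"
  by (subst aug_sup[of "{k}"]) auto

lemma phiA_zero[simp]: "phiA f 0 = 0" by (simp add: phiA_def)
lemma aug_zero[simp]: "aug 0 = 0" by (simp add: aug_def)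

lemma phiA_uminus: "phiA f (- x) = - phiA f x"
  using phiA_add[of f x "-x"] by (metis add.commute add.right_inverse eq_neg_iff_add_eq_0 phiA_zero)
lemma aug_uminus: "aug (- x) = - aug x"
  using aug_add[of x "-x"] by (metis add.commute add.right_inverse eq_neg_iff_add_eq_0 aug_zero)
lemma phiA_diff: "phiA f (x - y) = phiA f x - phiA f y"
  unfolding diff_conv_add_uminus by (simp only: phiA_add phiA_uminus)
lemma aug_diff: "aug (x - y) = aug x - aug y"
  unfolding diff_conv_add_uminus by (simp only: aug_add aug_uminus)

lemma aug_phiA: "aug (phiA f x) = aug x"
  by (induction x rule: pm_induct) (auto simp: phiA_add aug_add)

lemma phiA_mult:
  assumes f: "\<And>x y. f (x + y) = f x + f y"
  shows "phiA f (x * y) = phiA f x * phiA f y"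
proof (induction x arbitrary: y rule: pm_induct)
  case (single k a)
  show ?case
  proof (induction y rule: pm_induct)
    case (single l b)
    show ?case by (simp only: mult_single f phiA_single)
  next
    case (add c d)
    then show ?case by (simp only: distrib_left phiA_add)
  qed
next
  case (add a b) then show ?case by (simp only: distrib_right phiA_add)
qed

lemma phiA_one: "f 0 = 0 \<Longrightarrow> phiA f 1 = 1"
  by (metis phiA_single single_one)

lemma phiA_power:
  assumes f: "\<And>x y. f (x + y) = f x + f y"
  shows "phiA f (x ^ n) = phiA f x ^ n"
proof -
  have "f 0 = 0" using f[of 0 0] by simp
  then show ?thesis by (induction n) (simp_all add: phiA_one phiA_mult[OF f])
qed

lemma phiA_Jpow:
  assumes f: "\<And>x y. f (x + y) = f x + f y"
  shows "x \<in> Jpow k \<Longrightarrow> phiA f x \<in> Jpow k"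
proof -
  have "Jmem k x \<Longrightarrow> Jmem k (phiA f x)" for x
  proof (induction rule: Jmem.induct)
    case (JmemM a m b)
    then have "phiA f a \<in> augJ" by (simp add: augJ_def aug_phiA)
    then show ?case using JmemM by (simp add: phiA_mult[OF f] Jmem.JmemM)
  qed (auto simp: phiA_add phiA_mult[OF f] intro: Jmem.intros)
  then show "x \<in> Jpow k \<Longrightarrow> phiA f x \<in> Jpow k" unfolding Jpow_def mem_Collect_eq by blast
qed

lemma delta_mult: "delta a * delta b = delta (a + b)"
  by (simp add: delta_def mult_single)
lemma delta_0[simp]: "delta 0 = 1" by (simp add: delta_def)
lemma delta_power: "(delta (a::'l::comm_ring_1) :: ('l,'c::comm_ring_1) grpring) ^ n = delta (of_nat n * a)"
proof (induction n)
  case (Suc n)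
  have "(delta a :: ('l,'c) grpring) ^ Suc n = delta (a + of_nat n * a)" by (simp only: power_Suc Suc delta_mult)
  also have "a + of_nat n * a = of_nat (Suc n) * a" by (simp add: distrib_right)
  finally show ?case .
qed simp
lemma delta_minus1_augJ: "delta (a::'l) - (1::('l::ab_group_add,'c::comm_ring_1) grpring) \<in> augJ"
proof -
  have "aug (1::('l,'c) grpring) = 1"
    by (metis aug_single single_one)
  then show ?thesis by (simp add: augJ_def aug_diff delta_def)
qed
lemma phiA_delta: "phiA f (delta a) = delta (f a)" by (simp add: delta_def)




definition Gf :: "'b::comm_ring_1 \<Rightarrow> nat \<Rightarrow> 'b \<Rightarrow> 'b" where
  "Gf t N r = (\<Sum>i\<in>{1..N}. of_nat (N choose i) * t^(i-1) * r^i)"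

lemma Gf_binom: "(1 + t * r) ^ N = 1 + t * Gf t N r"
proof -
  have "(1 + t * r) ^ N = (t * r + 1) ^ N" by (simp add: add.commute)
  also have "\<dots> = (\<Sum>k\<le>N. of_nat (N choose k) * (t*r)^k)"
    by (simp add: binomial_ring)
  also have "{..N} = insert 0 {1..N}" by auto
  also have "(\<Sum>k\<in>insert 0 {1..N}. of_nat (N choose k) * (t*r)^k)
      = 1 + (\<Sum>k\<in>{1..N}. of_nat (N choose k) * (t*r)^k)" by simp
  also have "(\<Sum>k\<in>{1..N}. of_nat (N choose k) * (t*r)^k) = t * Gf t N r"
    unfolding Gf_def sum_distrib_left
  proof (rule sum.cong[OF refl])
    fix k assume "k \<in> {1..N}"
    then have "k = Suc (k - 1)" by auto
    then have "(t*r)^k = t * (t^(k-1) * r^k)"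
      by (metis power_Suc power_mult_distrib mult.assoc)
    then show "of_nat (N choose k) * (t*r)^k = t * (of_nat (N choose k) * t ^ (k - 1) * r ^ k)"
      by (simp add: algebra_simps)
  qed
  finally show ?thesis .
qed

lemma Gf_diff: "\<exists>h. Gf t N a - Gf t N b = (a - b) * (of_nat N + t * h)"
proof -
  have "\<forall>i\<in>{1..N}. \<exists>h. of_nat (N choose i) * t^(i-1) * a^i - of_nat (N choose i) * t^(i-1) * b^i
        = (a - b) * ((if i = 1 then of_nat N else 0) + t * h)"
  proof
    fix i assume i: "i \<in> {1..N}"
    show "\<exists>h. of_nat (N choose i) * t^(i-1) * a^i - of_nat (N choose i) * t^(i-1) * b^i
        = (a - b) * ((if i = 1 then of_nat N else 0) + t * h)"
    proof (cases "i = 1")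
      case True then show ?thesis by (rule_tac x=0 in exI) (simp add: algebra_simps)
    next
      case False
      with i have ii: "i - 1 = Suc (i - 2)" by auto
      define S where "S = (\<Sum>j<i. b^(i - Suc j) * a^j)"
      have "a^i - b^i = (a - b) * S" unfolding S_def by (rule power_diff_sumr2)
      then have "of_nat (N choose i) * t^(i-1) * a^i - of_nat (N choose i) * t^(i-1) * b^i
          = (a - b) * (t * (of_nat (N choose i) * t^(i-2) * S))"
      proof -
        have "t^(i-1) = t * t^(i-2)" by (metis ii power_Suc)
        then have "of_nat (N choose i) * t^(i-1) * a^i - of_nat (N choose i) * t^(i-1) * b^i
          = (of_nat (N choose i) * t * t^(i-2)) * (a^i - b^i)" by (simp add: right_diff_distrib mult.assoc)
        also have "\<dots> = (a - b) * (t * (of_nat (N choose i) * t^(i-2) * S))"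
          using \<open>a^i - b^i = (a - b) * S\<close> by (simp add: mult_ac)
        finally show ?thesis .
      qed
      then show ?thesis using False by auto
    qed
  qed
  then obtain h where h: "\<And>i. i \<in> {1..N} \<Longrightarrow> of_nat (N choose i) * t^(i-1) * a^i - of_nat (N choose i) * t^(i-1) * b^i
        = (a - b) * ((if i = 1 then of_nat N else 0) + t * h i)"
    by metis
  have "Gf t N a - Gf t N b = (\<Sum>i\<in>{1..N}. (a - b) * ((if i = 1 then of_nat N else 0) + t * h i))"
    unfolding Gf_def sum_subtractf[symmetric] by (rule sum.cong[OF refl], rule h)
  also have "\<dots> = (a - b) * (\<Sum>i\<in>{1..N}. (if i = 1 then of_nat N else 0) + t * h i)"
    by (simp only: sum_distrib_left)
  also have "\<dots> = (a - b) * ((\<Sum>i\<in>{1..N}. (if i = 1 then of_nat N else 0)) + t * (\<Sum>i\<in>{1..N}. h i))"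
    by (simp only: sum.distrib sum_distrib_left)
  also have "(\<Sum>i\<in>{1..N}. (if i = 1 then of_nat N else 0)) = (of_nat N :: 'a)"
    by (cases "N = 0") (auto simp: sum.delta)
  finally show ?thesis by blast
qed

lemma unit_lift:
  assumes "unitA (of_nat N :: 'c::comm_ring_1)"
  shows "\<exists>u::('l::ab_group_add,'c) grpring. u * of_nat N = 1"
proof -
  obtain y :: 'c where y: "of_nat N * y = 1" using assms by (auto simp: unitA_def)
  have "Poly_Mapping.single 0 y * (of_nat N :: ('l,'c) grpring) = 1"
    by (metis single_of_nat mult_single add_0 y mult.commute single_one)
  then show ?thesis by blast
qed

primrec rseq :: "'b::comm_ring_1 \<Rightarrow> nat \<Rightarrow> 'b \<Rightarrow> nat \<Rightarrow> 'b" where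
  "rseq t N u 0 = 0"
| "rseq t N u (Suc k) = rseq t N u k - u * (Gf t N (rseq t N u k) - 1)"

lemma hensel:
  fixes t u :: "('l::ab_group_add,'c::comm_ring_1) grpring"
  assumes t: "t \<in> augJ" and u: "u * of_nat N = 1"
  shows "cvalid (rseq t N u) \<and> (\<forall>k. (1 + t * rseq t N u k)^N - (1 + t) \<in> Jpow (Suc k))"
proof -
  define r where "r = rseq t N u"
  define e where "e k = Gf t N (r k) - 1" for k
  have e: "e k \<in> Jpow k" for k
  proof (induction k)
    case (Suc k)
    obtain h where h: "Gf t N (r (Suc k)) - Gf t N (r k) = (r (Suc k) - r k) * (of_nat N + t * h)"
      using Gf_diff by blast
    have rs: "r (Suc k) - r k = - u * e k" by (simp add: r_def e_def)
    have "e (Suc k) = e k + (Gf t N (r (Suc k)) - Gf t N (r k))" by (simp add: e_def)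
    also have "\<dots> = e k + (- u * e k) * (of_nat N + t * h)" by (simp add: h rs)
    also have "\<dots> = e k - (u * of_nat N) * e k - t * (u * e k * h)" by (simp add: algebra_simps)
    also have "\<dots> = t * (- (u * e k * h))" by (simp add: u)
    finally have "e (Suc k) = t * (- (u * e k * h))" .
    moreover have "- (u * e k * h) \<in> Jpow k"
      by (intro Jpow_uminus Jpow_multR Jpow_multL Suc)
    ultimately show ?case using augJ_mult[OF t] by metis
  qed simp
  have "cvalid r"
    unfolding cvalid_def
  proof
    fix k
    have "r (Suc k) - r k = - u * e k" by (simp add: r_def e_def)
    then show "r (Suc k) - r k \<in> Jpow k" using e Jpow_multL by metis
  qed
  moreover have "(1 + t * r k)^N - (1 + t) \<in> Jpow (Suc k)" for k
  proof -
    have "(1 + t * r k)^N - (1 + t) = t * e k" by (simp add: Gf_binom e_def algebra_simps)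
    then show ?thesis using augJ_mult[OF t e] by simp
  qed
  ultimately show ?thesis by (simp add: r_def)
qed

definition Rt :: "('l::ab_group_add,'c::comm_ring_1) compl \<Rightarrow> nat \<Rightarrow> ('l,'c) grpring \<Rightarrow> bool" where
  "Rt x M c \<longleftrightarrow> (\<forall>k. x k ^ M - c \<in> Jpow k) \<and> (\<forall>k>0. x k - 1 \<in> Jpow 1)"

lemma one_pow_J1: "x - 1 \<in> Jpow 1 \<Longrightarrow> x ^ n - 1 \<in> Jpow 1"
  using power_diff_Jpow[of x 1 1 n] by simp

lemma root_unique_level:
  fixes x y u :: "('l::ab_group_add,'c::comm_ring_1) grpring"
  assumes u: "u * of_nat M = 1"
    and x1: "x - 1 \<in> Jpow 1" and y1: "y - 1 \<in> Jpow 1"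
    and xy: "x ^ M - y ^ M \<in> Jpow k"
  shows "x - y \<in> Jpow k"
proof -
  define S where "S = (\<Sum>i<M. y^(M - Suc i) * x^i)"
  have dS: "x ^ M - y ^ M = (x - y) * S" unfolding S_def by (rule power_diff_sumr2)
  have "S - of_nat M = (\<Sum>i<M. y^(M - Suc i) * x^i - 1)"
    by (simp add: S_def sum_subtractf)
  also have "\<dots> \<in> Jpow 1"
  proof (rule Jpow_sum)
    fix i
    have "y^(M - Suc i) * x^i - 1 = y^(M - Suc i) * (x^i - 1) + (y^(M - Suc i) - 1)"
      by (simp add: algebra_simps)
    moreover have "y^(M - Suc i) * (x^i - 1) \<in> Jpow 1" using one_pow_J1[OF x1] by (rule Jpow_multL)
    moreover have "y^(M - Suc i) - 1 \<in> Jpow 1" using one_pow_J1[OF y1] .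
    ultimately show "y^(M - Suc i) * x^i - 1 \<in> Jpow 1" by (metis Jpow_add)
  qed
  finally have S1: "S - of_nat M \<in> Jpow 1" .
  have "m \<le> k \<Longrightarrow> x - y \<in> Jpow m" for m
  proof (induction m)
    case (Suc m)
    then have d: "x - y \<in> Jpow m" by simp
    have a: "(x - y) * S \<in> Jpow (Suc m)" using xy dS Suc.prems Jpow_mono by metis
    have b: "(x - y) * (S - of_nat M) \<in> Jpow (Suc m)" using Jpow_mult[OF d S1] by simp
    have "(x - y) * of_nat M \<in> Jpow (Suc m)"
      using Jpow_diff[OF a b] by (simp add: algebra_simps)
    then have "u * ((x - y) * of_nat M) \<in> Jpow (Suc m)" by (rule Jpow_multL)
    moreover have "u * ((x - y) * of_nat M) = x - y" by (metis mult.assoc mult.commute mult_1 u)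
    ultimately show ?case by simp
  qed simp
  then show ?thesis by simp
qed

lemma root_unique:
  fixes x y :: "('l::ab_group_add,'c::comm_ring_1) compl"
  assumes M: "unitA (of_nat M :: 'c)" and "Rt x M c" "Rt y M c"
  shows "x \<approx> y"
proof -
  obtain u :: "('l,'c) grpring" where u: "u * of_nat M = 1" using unit_lift[OF M] by blast
  show ?thesis unfolding ceq_def
  proof
    fix k
    show "x k - y k \<in> Jpow k"
    proof (cases "k = 0")
      case False
      have "x k ^ M - y k ^ M = (x k ^ M - c) - (y k ^ M - c)" by simp
      also have "\<dots> \<in> Jpow k" by (rule Jpow_diff) (use assms(2,3) in \<open>auto simp: Rt_def\<close>)
      finally show ?thesis using root_unique_level[OF u] assms(2,3) False by (auto simp: Rt_def)
    qed simp
  qed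
qed




lemma ivec_add: "ivec (a + b) = ivec a + ivec b"
  by (simp add: ivec_def vec_eq_iff)
lemma ivec_uminus: "ivec (- a) = - ivec a"
  by (simp add: ivec_def vec_eq_iff)
lemma ivec_diff: "ivec (a - b) = ivec a - ivec b"
  by (simp add: ivec_def vec_eq_iff)
lemma ivec_zero[simp]: "ivec 0 = 0"
  by (simp add: ivec_def vec_eq_iff)
lemma ivec_inj: "ivec a = ivec b \<Longrightarrow> a = b"
  by (simp add: ivec_def vec_eq_iff)
lemma ivec_of_nat_mult: "ivec (of_nat q * l) = real q *\<^sub>R ivec l"
  by (simp add: ivec_def vec_eq_iff of_nat_index)
lemma ivec_smult: "ivec (c *s l) = real_of_int c *\<^sub>R ivec l"
  by (simp add: ivec_def vec_eq_iff)
lemma ivec_sum: "ivec (sum f S) = (\<Sum>i\<in>S. ivec (f i))"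
  by (induction S rule: infinite_finite_induct) (auto simp: ivec_add)

lemma inL_add: "inL a \<Longrightarrow> inL b \<Longrightarrow> inL (a + b)"
  by (metis inL_def ivec_add)
lemma inL_diff: "inL a \<Longrightarrow> inL b \<Longrightarrow> inL (a - b)"
  by (metis inL_def ivec_diff)
lemma inL_ivec[simp]: "inL (ivec l)" by (auto simp: inL_def)
lemma inL_scale: "inL a \<Longrightarrow> inL (real q *\<^sub>R a)"
  by (metis inL_def ivec_of_nat_mult)

lemma tord_props:
  assumes "M > 0" "inL (real M *\<^sub>R v)"
  shows "tord v > 0 \<and> inL (real (tord v) *\<^sub>R v) \<and> tord v dvd M"
proof -
  have ex: "\<exists>N. N > 0 \<and> inL (real N *\<^sub>R v)" using assms by blast
  have P: "tord v > 0 \<and> inL (real (tord v) *\<^sub>R v)"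
    unfolding tord_def by (rule LeastI_ex[OF ex])
  have min: "\<And>N. N > 0 \<Longrightarrow> inL (real N *\<^sub>R v) \<Longrightarrow> tord v \<le> N"
    unfolding tord_def by (rule Least_le) simp
  define r where "r = M mod tord v"
  define q where "q = M div tord v"
  have Mq: "M = q * tord v + r" by (simp add: q_def r_def)
  have "real r *\<^sub>R v = real M *\<^sub>R v - real q *\<^sub>R (real (tord v) *\<^sub>R v)"
    by (simp add: Mq algebra_simps)
  then have "inL (real r *\<^sub>R v)" using assms(2) P by (metis inL_diff inL_scale)
  moreover have "r < tord v" using P by (simp add: r_def)
  ultimately have "r = 0" using min by (meson not_le not_gr_zero)
  then show ?thesis using P unfolding r_def by (metis dvd_eq_mod_eq_0)
qed

lemma unitA_dvd:
  assumes "unitA (of_nat M :: 'c::comm_ring_1)" "d dvd M"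
  shows "unitA (of_nat d :: 'c)"
proof -
  obtain q where "M = d * q" using assms(2) by blast
  moreover obtain y :: 'c where "of_nat M * y = 1" using assms(1) by (auto simp: unitA_def)
  ultimately have "of_nat d * (of_nat q * y) = (1::'c)" by (simp add: mult.assoc)
  then show ?thesis by (auto simp: unitA_def)
qed

lemma unitA_mult: "unitA (of_nat a :: 'c::comm_ring_1) \<Longrightarrow> unitA (of_nat b :: 'c) \<Longrightarrow> unitA (of_nat (a * b) :: 'c)"
  unfolding unitA_def by (metis mult.assoc mult.left_commute mult_1_right of_nat_mult)

lemma TA_intro:
  assumes "M > 0" "inL (real M *\<^sub>R v)" "unitA (of_nat M :: 'c::comm_ring_1)"
  shows "TA (A::'c itself) v"
  using tord_props[OF assms(1,2)] unitA_dvd[OF assms(3)] assms(1,2) by (auto simp: TA_def)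

lemma TA_D:
  assumes "TA (A::'c::comm_ring_1 itself) v"
  shows "tord v > 0 \<and> inL (real (tord v) *\<^sub>R v) \<and> unitA (of_nat (tord v) :: 'c)"
  using assms tord_props by (auto simp: TA_def)

lemma TA_tord_dvd:
  assumes "M > 0" "inL (real M *\<^sub>R v)"
  shows "tord v dvd M"
  using tord_props[OF assms] by simp

lemma additive_zero: "(\<And>x y. f (x + y) = f x + f y) \<Longrightarrow> f (0::'a::ab_group_add) = (0::'b::ab_group_add)"
  by (metis add_cancel_right_right add_0)

lemma additive_uminus:
  fixes f :: "'a::ab_group_add \<Rightarrow> 'b::ab_group_add"
  assumes "\<And>x y. f (x + y) = f x + f y" shows "f (- x) = - (f x)"
proof -
  have "f x + f (- x) = 0" using assms[of x "-x"] additive_zero[of f, OF assms] by simp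
  then show ?thesis by (metis add.commute eq_neg_iff_add_eq_0)
qed

lemma additive_sum:
  fixes f :: "'a::ab_group_add \<Rightarrow> 'b::ab_group_add"
  assumes "\<And>x y. f (x + y) = f x + f y" shows "f (sum g S) = (\<Sum>i\<in>S. f (g i))"
  by (induction S rule: infinite_finite_induct) (auto simp: assms additive_zero[of f, OF assms])

lemma additive_smult:
  fixes f :: "int ^ 'n \<Rightarrow> int ^ 'm"
  assumes f: "\<And>x y. f (x + y) = f x + f y"
  shows "f (c *s x) = c *s f x"
proof -
  have nat: "f (int k *s x) = int k *s f x" for k
  proof (induction k)
    case 0 then show ?case using additive_zero[of f, OF f] by (simp add: vec_eq_iff)
  next
    case (Suc k)
    have "int (Suc k) *s x = x + int k *s x" by (simp add: vec_eq_iff algebra_simps)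
    moreover have "int (Suc k) *s f x = f x + int k *s f x" by (simp add: vec_eq_iff algebra_simps)
    ultimately show ?case by (simp add: f Suc)
  qed
  show ?thesis
  proof (cases "c \<ge> 0")
    case True then show ?thesis using nat[of "nat c"] by simp
  next
    case False
    then have "c = - int (nat (- c))" by simp
    moreover have "(- int k) *s x = - (int k *s x)" for k and x :: "int ^ 'l"
      by (simp add: vec_eq_iff)
    ultimately show ?thesis using nat[of "nat (-c)"] additive_uminus[of f, OF f] by metis
  qed
qed

lemma phiV_ivec:
  fixes f :: "int ^ 'n \<Rightarrow> int ^ 'm"
  assumes f: "\<And>x y. f (x + y) = f x + f y"
  shows "phiV f (ivec l) = ivec (f l)"
proof -
  have "f l = f (\<Sum>i\<in>UNIV. (l$i) *s axis i 1)" by (simp add: basis_expansion)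
  also have "\<dots> = (\<Sum>i\<in>UNIV. (l$i) *s f (axis i 1))"
    by (simp add: additive_sum[of f, OF f] additive_smult[OF f])
  finally have "ivec (f l) = (\<Sum>i\<in>UNIV. real_of_int (l$i) *\<^sub>R ivec (f (axis i 1)))"
    by (simp add: ivec_sum ivec_smult)
  then show ?thesis by (simp add: phiV_def ivec_def)
qed

lemma phiV_scale: "phiV f (c *\<^sub>R v) = c *\<^sub>R phiV f v"
  by (simp add: phiV_def scaleR_sum_right)




lemma ceq_refl: "ceq s s" by (simp add: ceq_def)
lemma ceq_sym: "ceq s t \<Longrightarrow> ceq t s"
  unfolding ceq_def by (metis Jpow_uminus minus_diff_eq)
lemma ceq_trans: "ceq s t \<Longrightarrow> ceq t u \<Longrightarrow> ceq s u"
  unfolding ceq_def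
proof (intro allI)
  fix k assume a: "\<forall>k. s k - t k \<in> Jpow k" and b: "\<forall>k. t k - u k \<in> Jpow k"
  have "s k - u k = (s k - t k) + (t k - u k)" by simp
  then show "s k - u k \<in> Jpow k" using a b Jpow_add by metis
qed
lemma ceq_cmul: "ceq s s' \<Longrightarrow> ceq t t' \<Longrightarrow> ceq (cmul s t) (cmul s' t')"
  unfolding ceq_def cmul_def
proof
  fix k assume a: "\<forall>k. s k - s' k \<in> Jpow k" and b: "\<forall>k. t k - t' k \<in> Jpow k"
  have "s k * t k - s' k * t' k = s k * (t k - t' k) + (s k - s' k) * t' k"
    by (simp add: algebra_simps)
  moreover have "s k * (t k - t' k) \<in> Jpow k" using b Jpow_multL by blast
  moreover have "(s k - s' k) * t' k \<in> Jpow k" using a Jpow_multR by blast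
  ultimately show "s k * t k - s' k * t' k \<in> Jpow k" by (metis Jpow_add)
qed

lemma Rt_pow: "Rt x M c \<Longrightarrow> Rt x (M * q) (c ^ q)"
  unfolding Rt_def by (simp add: power_mult power_diff_Jpow)

lemma Rt_mult:
  assumes "Rt x M c" "Rt y M d"
  shows "Rt (cmul x y) M (c * d)"
  unfolding Rt_def cmul_def
proof (intro conjI allI impI)
  fix k
  have "(x k * y k) ^ M - c * d = x k ^ M * (y k ^ M - d) + d * (x k ^ M - c)"
    by (simp add: power_mult_distrib algebra_simps)
  moreover have "x k ^ M * (y k ^ M - d) \<in> Jpow k" using assms unfolding Rt_def by (blast intro: Jpow_multL)
  moreover have "d * (x k ^ M - c) \<in> Jpow k" using assms unfolding Rt_def by (blast intro: Jpow_multL)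
  ultimately show "(x k * y k) ^ M - c * d \<in> Jpow k" by (metis Jpow_add)
next
  fix k :: nat assume "k > 0"
  have "x k * y k - 1 = x k * (y k - 1) + (x k - 1)" by (simp add: algebra_simps)
  moreover have "x k * (y k - 1) \<in> Jpow 1" using assms \<open>k > 0\<close> unfolding Rt_def by (blast intro: Jpow_multL)
  moreover have "x k - 1 \<in> Jpow 1" using assms \<open>k > 0\<close> unfolding Rt_def by blast
  ultimately show "x k * y k - 1 \<in> Jpow 1" by (metis Jpow_add)
qed

lemma Rt_const: "d - 1 \<in> Jpow 1 \<Longrightarrow> Rt (cemb d) M (d ^ M)"
  by (simp add: Rt_def cemb_def)

lemma Rt_delta: "Rt (cemb (delta a)) M (delta a ^ M)"
  by (rule Rt_const) (rule augJ_Jpow1[OF delta_minus1_augJ])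

lemma Rt_phi:
  assumes f: "\<And>x y. f (x + y) = f x + f y" and R: "Rt x M c"
  shows "Rt (phiR f x) M (phiA f c)"
  unfolding Rt_def phiR_def
proof (intro conjI allI impI)
  fix k
  have "phiA f (x k) ^ M - phiA f c = phiA f (x k ^ M - c)"
    by (simp add: phiA_power[OF f] phiA_diff)
  moreover have "x k ^ M - c \<in> Jpow k" using R unfolding Rt_def by blast
  ultimately show "phiA f (x k) ^ M - phiA f c \<in> Jpow k"
    using phiA_Jpow[OF f] by metis
next
  fix k :: nat assume "k > 0"
  have "f 0 = 0" using additive_zero[of f, OF f] .
  then have "phiA f (x k) - 1 = phiA f (x k - 1)" by (simp add: phiA_diff phiA_one)
  moreover have "x k - 1 \<in> Jpow 1" using R \<open>k > 0\<close> unfolding Rt_def by blast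
  ultimately show "phiA f (x k) - 1 \<in> Jpow 1"
    using phiA_Jpow[OF f] by metis
qed

definition croot :: "nat \<Rightarrow> 'l::ab_group_add \<Rightarrow> ('l,'c::comm_ring_1) compl" where
  "croot N l = (let t = delta (- l) - 1; u = (SOME u. u * of_nat N = (1::('l,'c) grpring))
     in (\<lambda>k. 1 + t * rseq t N u k))"

lemma croot_props:
  assumes N: "unitA (of_nat N :: 'c::comm_ring_1)" "N > 0"
  shows "Rt (croot N l :: ('l::ab_group_add,'c) compl) N (delta (- l)) \<and> cvalid (croot N l :: ('l,'c) compl)
     \<and> cunit (croot N l :: ('l,'c) compl) \<and> inI (cdiff (croot N l :: ('l,'c) compl) cone)"
proof -
  define t :: "('l,'c) grpring" where "t = delta (- l) - 1"
  define u :: "('l,'c) grpring" where "u = (SOME u. u * of_nat N = 1)"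
  have u: "u * of_nat N = 1" unfolding u_def by (rule someI_ex) (rule unit_lift[OF N(1)])
  have t: "t \<in> augJ" unfolding t_def by (rule delta_minus1_augJ)
  define r where "r = rseq t N u"
  have H: "cvalid r" "\<And>k. (1 + t * r k)^N - (1 + t) \<in> Jpow (Suc k)"
    using hensel[OF t u] by (auto simp: r_def)
  define z :: "('l,'c) compl" where "z = croot N l"
  have cr: "z = (\<lambda>k. 1 + t * r k)" by (simp add: z_def croot_def t_def u_def r_def Let_def)
  have tr1: "t * r k \<in> Jpow 1" for k using augJ_mult[OF t, of "r k" 0] by simp
  have Rt: "Rt (z) N (delta (- l))"
    unfolding Rt_def cr
  proof (intro conjI allI impI)
    fix k
    show "(1 + t * r k) ^ N - delta (- l) \<in> Jpow k"
      using H(2)[of k] Jpow_Suc by (simp add: t_def)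
  next
    fix k :: nat show "1 + t * r k - 1 \<in> Jpow 1" using tr1 by simp
  qed
  have valid: "cvalid (z)"
    unfolding cvalid_def cr
  proof
    fix k
    have "1 + t * r (Suc k) - (1 + t * r k) = t * (r (Suc k) - r k)" by (simp add: algebra_simps)
    then show "1 + t * r (Suc k) - (1 + t * r k) \<in> Jpow k"
      using H(1) Jpow_multL by (metis cvalid_def)
  qed
  have inI: "inI (cdiff (z) cone)"
    unfolding inI_def
  proof (intro exI conjI)
    show "length [t] = length [r]" by simp
    show "set [t] \<subseteq> augJ" using t by simp
    show "\<forall>r\<in>set [r]. cvalid r" using H(1) by simp
    show "ceq (cdiff (z) cone) (\<lambda>k. \<Sum>i<length [t]. [t] ! i * ([r] ! i) k)"
      by (simp add: cr cdiff_def cone_def cemb_def ceq_refl)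
  qed
  define w where "w k = z k ^ (N - 1) * delta l" for k
  have unit: "cunit (z)"
    unfolding cunit_def
  proof (intro exI conjI)
    show "cvalid w"
      unfolding cvalid_def w_def
    proof
      fix k
      have "z (Suc k) ^ (N - 1) - z k ^ (N - 1) \<in> Jpow k"
        using valid power_diff_Jpow by (metis cvalid_def)
      then show "z (Suc k) ^ (N - 1) * delta l - z k ^ (N - 1) * delta l \<in> Jpow k"
        by (metis Jpow_multR left_diff_distrib)
    qed
    show "ceq (cmul w (z)) cone"
      unfolding ceq_def
    proof (rule allI)
      fix k
      have d: "delta (- l) * delta l = (1::('l,'c) grpring)" by (simp add: delta_mult)
      have zN: "z k ^ N = z k * z k ^ (N-1)" using N(2) by (cases N) simp_all
      have "w k * z k = z k ^ (N - 1) * delta l * z k" by (simp only: w_def)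
      also have "\<dots> = (z k * z k ^ (N - 1)) * delta l" by (metis mult.commute mult.left_commute)
      also have "\<dots> = z k ^ N * delta l" by (simp only: zN)
      finally have e1: "w k * z k - 1 = z k ^ N * delta l - 1" by simp
      have e2: "z k ^ N * delta l - 1 = (z k ^ N - delta (- l)) * delta l"
        by (simp only: left_diff_distrib d)
      have "z k ^ N - delta (- l) \<in> Jpow k" using Rt unfolding Rt_def by blast
      then have "(z k ^ N - delta (- l)) * delta l \<in> Jpow k" by (rule Jpow_multR)
      then have "w k * z k - 1 \<in> Jpow k" using e1 e2 by simp
      then show "cmul w (z) k - cone k \<in> Jpow k"
        by (simp add: cmul_def cone_def cemb_def)
    qed
  qed
  show ?thesis using Rt valid unit inI by (simp add: z_def)
qed




definition lof :: "real ^ 'n \<Rightarrow> int ^ 'n" where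
  "lof v = (THE l. ivec l = real (tord v) *\<^sub>R v)"

lemma lof:
  assumes "TA (A::'c::comm_ring_1 itself) v"
  shows "ivec (lof v) = real (tord v) *\<^sub>R v"
proof -
  obtain l where l: "ivec l = real (tord v) *\<^sub>R v" using TA_D[OF assms] by (auto simp: inL_def)
  have "(THE l. ivec l = real (tord v) *\<^sub>R v) = l"
  proof (rule the_equality)
    show "ivec l = real (tord v) *\<^sub>R v" by (rule l)
  next
    fix la assume "ivec la = real (tord v) *\<^sub>R v"
    then have "ivec la = ivec l" using l by simp
    then show "la = l" by (rule ivec_inj)
  qed
  then show ?thesis using l by (simp add: lof_def)
qed

lemma lof_scaled:
  assumes "TA (A::'c::comm_ring_1 itself) v"
  shows "real (tord v * q) *\<^sub>R v = ivec (of_nat q * lof v)"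
  using lof[OF assms] by (simp add: ivec_of_nat_mult mult.commute)

definition gcan :: "'c::comm_ring_1 itself \<Rightarrow> real ^ 'n \<Rightarrow> (int ^ 'n, 'c) compl" where
  "gcan A v = croot (tord v) (lof v)"

lemma key_can:
  fixes v :: "real ^ 'n"
  assumes TA: "TA (A::'c::comm_ring_1 itself) v" and M: "M > 0" and m: "real M *\<^sub>R v = ivec m"
  shows "Rt (gcan A v) M (delta (- m))"
proof -
  define N where "N = tord v"
  have NA: "N > 0" "unitA (of_nat N :: 'c)" using TA_D[OF TA] by (auto simp: N_def)
  have "N dvd M" unfolding N_def by (rule TA_tord_dvd[OF M]) (simp add: m)
  then obtain q where q: "M = N * q" by blast
  have R: "Rt (gcan A v) N (delta (- lof v))"
    using croot_props[OF NA(2) NA(1), of "lof v"] unfolding gcan_def N_def by blast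
  have "ivec (of_nat q * lof v) = ivec m" using lof_scaled[OF TA, of q] m q by (simp add: N_def)
  then have "of_nat q * lof v = m" by (rule ivec_inj)
  then have "delta (- lof v) ^ q = (delta (- m) :: (int ^ 'n, 'c) grpring)"
    by (simp add: delta_power)
  then show ?thesis using Rt_pow[OF R, of q] q by simp
qed

lemma TA_scale:
  assumes "TA (A::'c::comm_ring_1 itself) v"
  shows "TA A (real j *\<^sub>R v)"
proof -
  have "inL (real (tord v) *\<^sub>R (real j *\<^sub>R v))"
    using inL_scale[of "real (tord v) *\<^sub>R v" j] TA_D[OF assms] by (simp add: mult.commute)
  then show ?thesis using TA_intro[of "tord v" "real j *\<^sub>R v"] TA_D[OF assms] by blast
qed

lemma TA_zero: "TA (A::'c::comm_ring_1 itself) 0"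
proof -
  have "inL (real 1 *\<^sub>R (0::real^'n))" using inL_ivec[of 0] by simp
  moreover have "unitA (of_nat 1 :: 'c)" by (simp add: unitA_def)
  ultimately show ?thesis by (intro TA_intro[of 1]) auto
qed

lemma inI_J1:
  assumes "inI s" "k > 0"
  shows "s k \<in> Jpow 1"
proof -
  obtain js rs where js: "set js \<subseteq> augJ" and e: "ceq s (\<lambda>k. \<Sum>i<length js. js ! i * (rs ! i) k)"
    using assms(1) unfolding inI_def by blast
  have a: "s k - (\<Sum>i<length js. js ! i * (rs ! i) k) \<in> Jpow 1"
    using e assms(2) Jpow_mono[of 1 k] unfolding ceq_def by auto
  have b: "(\<Sum>i<length js. js ! i * (rs ! i) k) \<in> Jpow 1"
  proof (rule Jpow_sum)
    fix i assume "i \<in> {..<length js}"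
    then have "js ! i \<in> augJ" using js nth_mem by blast
    then show "js ! i * (rs ! i) k \<in> Jpow 1" using augJ_Jpow1 Jpow_multR by blast
  qed
  have "s k = (s k - (\<Sum>i<length js. js ! i * (rs ! i) k)) + (\<Sum>i<length js. js ! i * (rs ! i) k)"
    by simp
  then show ?thesis using Jpow_add[OF a b] by simp
qed

lemma key_g:
  assumes g: "mult_triv (A::'c::comm_ring_1 itself) g"
    and TA: "TA A v" and M: "M > 0" and m: "real M *\<^sub>R v = ivec m"
  shows "Rt (g v) M (delta (- m))"
proof -
  have TA0: "TA A (0::real^'n)" by (rule TA_zero)
  have gTA: "TA A x \<Longrightarrow> cvalid (g x) \<and> cunit (g x) \<and> inI (cdiff (g x) cone)" for x
    using g by (simp add: mult_triv_def)
  have gtr: "TA A x \<Longrightarrow> ceq (g (x + ivec l)) (cmul (cemb (delta (- l))) (g x))" for x l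
    using g by (simp add: mult_triv_def)
  have gm: "TA A x \<Longrightarrow> TA A y \<Longrightarrow> ceq (g (x + y)) (cmul (g x) (g y))" for x y
    using g by (simp add: mult_triv_def)
  have g0: "ceq (g 0) cone"
  proof -
    obtain u where u: "ceq (cmul u (g 0)) cone" using gTA[OF TA0] by (auto simp: cunit_def)
    have e: "ceq (g 0) (cmul (g 0) (g 0))" using gm[OF TA0 TA0] by simp
    show ?thesis unfolding ceq_def
    proof (rule allI)
      fix k
      define a where "a = u k * g 0 k"
      have a1: "a - 1 \<in> Jpow k" using u by (simp add: ceq_def cmul_def cone_def cemb_def a_def)
      have e1: "g 0 k - g 0 k * g 0 k \<in> Jpow k" using e by (simp add: ceq_def cmul_def)
      have "g 0 k - 1 = g 0 k * (- (a - 1)) + u k * (- (g 0 k - g 0 k * g 0 k)) + (a - 1)"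
        by (simp add: a_def algebra_simps)
      moreover have "g 0 k * (- (a - 1)) \<in> Jpow k" using a1 by (intro Jpow_multL Jpow_uminus)
      moreover have "u k * (- (g 0 k - g 0 k * g 0 k)) \<in> Jpow k" using e1 by (intro Jpow_multL Jpow_uminus)
      ultimately have "g 0 k - 1 \<in> Jpow k" using a1 Jpow_add by metis
      then show "g 0 k - cone k \<in> Jpow k" by (simp add: cone_def cemb_def)
    qed
  qed
  have pow: "ceq (g (real j *\<^sub>R v)) (\<lambda>k. g v k ^ j)" for j
  proof (induction j)
    case 0 then show ?case using g0 by (simp add: cone_def cemb_def)
  next
    case (Suc j)
    have "real (Suc j) *\<^sub>R v = v + real j *\<^sub>R v" by (simp add: algebra_simps)
    then have "ceq (g (real (Suc j) *\<^sub>R v)) (cmul (g v) (g (real j *\<^sub>R v)))"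
      using gm[OF TA TA_scale[OF TA]] by simp
    moreover have "ceq (cmul (g v) (g (real j *\<^sub>R v))) (cmul (g v) (\<lambda>k. g v k ^ j))"
      by (rule ceq_cmul[OF ceq_refl Suc])
    moreover have "cmul (g v) (\<lambda>k. g v k ^ j) = (\<lambda>k. g v k ^ Suc j)" by (simp add: cmul_def)
    ultimately show ?case using ceq_trans by metis
  qed
  have c1: "ceq (g (0 + ivec m)) (cmul (cemb (delta (- m))) (g 0))" by (rule gtr[OF TA0])
  have c2: "ceq (cmul (cemb (delta (- m))) (g 0)) (cmul (cemb (delta (- m))) cone)"
    by (rule ceq_cmul[OF ceq_refl g0])
  have c3: "cmul (cemb (delta (- m))) cone = cemb (delta (- m))"
    by (simp add: cmul_def cone_def cemb_def)
  have "ceq (g (0 + ivec m)) (cemb (delta (- m)))" using ceq_trans[OF c1 c2] unfolding c3 .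
  then have "ceq (g (real M *\<^sub>R v)) (cemb (delta (- m)))" using m by simp
  then have "ceq (\<lambda>k. g v k ^ M) (cemb (delta (- m)))" by (rule ceq_trans[OF ceq_sym[OF pow[of M]]])
  then have p1: "\<forall>k. g v k ^ M - delta (- m) \<in> Jpow k" by (simp add: ceq_def cemb_def)
  have p2: "\<forall>k>0. g v k - 1 \<in> Jpow 1"
    using inI_J1 gTA[OF TA] by (fastforce simp: cdiff_def cone_def cemb_def)
  show ?thesis using p1 p2 by (simp add: Rt_def)
qed




lemma gcan_triv: "mult_triv (A::'c::comm_ring_1 itself) (gcan A :: real ^ 'n \<Rightarrow> (int ^ 'n, 'c) compl)"
  unfolding mult_triv_def
proof (intro conjI allI impI)
  fix v :: "real ^ 'n" assume TA: "TA A v"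
  have NA: "tord v > 0" "unitA (of_nat (tord v) :: 'c)" using TA_D[OF TA] by auto
  have P: "cvalid (croot (tord v) (lof v) :: (int ^ 'n, 'c) compl) \<and> cunit (croot (tord v) (lof v) :: (int ^ 'n, 'c) compl)
     \<and> inI (cdiff (croot (tord v) (lof v) :: (int ^ 'n, 'c) compl) cone)"
    using croot_props[OF NA(2) NA(1), of "lof v"] by blast
  then show "cvalid (gcan A v)" "cunit (gcan A v)" "inI (cdiff (gcan A v) cone)"
    by (simp_all add: gcan_def)
next
  fix v :: "real ^ 'n" and l :: "int ^ 'n" assume TA: "TA A v"
  define N where "N = tord v"
  have NA: "N > 0" "unitA (of_nat N :: 'c)" using TA_D[OF TA] by (auto simp: N_def)
  have m1: "real N *\<^sub>R v = ivec (lof v)" using lof[OF TA] by (simp add: N_def)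
  have m2: "real N *\<^sub>R (v + ivec l) = ivec (lof v + of_nat N * l)"
    using m1 by (simp add: scaleR_add_right ivec_add ivec_of_nat_mult)
  have TA2: "TA A (v + ivec l)" by (rule TA_intro[OF NA(1) _ NA(2)]) (simp add: m2)
  have R1: "Rt (gcan A (v + ivec l)) N (delta (- (lof v + of_nat N * l)))"
    by (rule key_can[OF TA2 NA(1) m2])
  have R2: "Rt (cmul (cemb (delta (- l))) (gcan A v)) N (delta (- l) ^ N * delta (- lof v))"
    by (rule Rt_mult[OF Rt_delta key_can[OF TA NA(1) m1]])
  have "delta (- l) ^ N * delta (- lof v) = (delta (- (lof v + of_nat N * l)) :: (int ^ 'n, 'c) grpring)"
    by (simp add: delta_power delta_mult algebra_simps)
  then show "ceq (gcan A (v + ivec l)) (cmul (cemb (delta (- l))) (gcan A v))"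
    using root_unique[OF NA(2) R1] R2 by simp
next
  fix v w :: "real ^ 'n" assume TAv: "TA A v" and TAw: "TA A w"
  define M where "M = tord v * tord w"
  have Mp: "M > 0" using TA_D[OF TAv] TA_D[OF TAw] by (simp add: M_def)
  have MA: "unitA (of_nat M :: 'c)" unfolding M_def
    using TA_D[OF TAv] TA_D[OF TAw] unitA_mult by blast
  have mv: "real M *\<^sub>R v = ivec (of_nat (tord w) * lof v)"
    using lof_scaled[OF TAv] by (simp add: M_def)
  have mw: "real M *\<^sub>R w = ivec (of_nat (tord v) * lof w)"
    using lof_scaled[OF TAw] by (simp add: M_def mult.commute)
  have mvw: "real M *\<^sub>R (v + w) = ivec (of_nat (tord w) * lof v + of_nat (tord v) * lof w)"
    using mv mw by (simp add: scaleR_add_right ivec_add)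
  have TAvw: "TA A (v + w)" by (rule TA_intro[OF Mp _ MA]) (simp add: mvw)
  have R1: "Rt (gcan A (v + w)) M (delta (- (of_nat (tord w) * lof v + of_nat (tord v) * lof w)))"
    by (rule key_can[OF TAvw Mp mvw])
  have R2: "Rt (cmul (gcan A v) (gcan A w)) M
      (delta (- (of_nat (tord w) * lof v)) * delta (- (of_nat (tord v) * lof w)))"
    by (rule Rt_mult[OF key_can[OF TAv Mp mv] key_can[OF TAw Mp mw]])
  have "delta (- (of_nat (tord w) * lof v)) * delta (- (of_nat (tord v) * lof w))
     = (delta (- (of_nat (tord w) * lof v + of_nat (tord v) * lof w)) :: (int ^ 'n, 'c) grpring)"
    by (simp add: delta_mult algebra_simps)
  then show "ceq (gcan A (v + w)) (cmul (gcan A v) (gcan A w))"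
    using root_unique[OF MA R1] R2 by simp
qed

theorem mainTheorem8:
  fixes A :: "'a::comm_ring_1 itself"
  shows
    \<comment> \<open>existence and uniqueness of the multiplicative trivialization over T^(A)\<close>
    "(\<exists>g :: real ^ 'n \<Rightarrow> (int ^ 'n, 'a) compl. mult_triv A g) \<and>
     (\<forall>(g :: real ^ 'n \<Rightarrow> (int ^ 'n, 'a) compl) g'. mult_triv A g \<longrightarrow> mult_triv A g' \<longrightarrow>
        (\<forall>v. TA A v \<longrightarrow> g v \<approx> g' v)) \<and>
     \<comment> \<open>compatibility with isogenies of degree invertible in A\<close>
     (\<forall>(f :: int ^ 'n \<Rightarrow> int ^ 'm) (g :: real ^ 'n \<Rightarrow> (int ^ 'n, 'a) compl)
        (g' :: real ^ 'm \<Rightarrow> (int ^ 'm, 'a) compl).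
        isogeny f \<longrightarrow> unitA (of_nat (isog_deg f) :: 'a) \<longrightarrow>
        mult_triv A g \<longrightarrow> mult_triv A g' \<longrightarrow>
        (\<forall>v. TA A v \<longrightarrow> g' (phiV f v) \<approx> phiR f (g v))) \<and>
     \<comment> \<open>description via [N]: [N]_Log(1_t) = [N]_Log(\<one>) in the stalk at 0, evaluated at N v\<close>
     (\<forall>(g :: real ^ 'n \<Rightarrow> (int ^ 'n, 'a) compl) (N :: nat) v l.
        mult_triv A g \<longrightarrow> N > 0 \<longrightarrow> unitA (of_nat N :: 'a) \<longrightarrow> real N *\<^sub>R v = ivec l \<longrightarrow>
        phiR (\<lambda>x. of_nat N * x) (g v) \<approx> cemb (delta (- l)))"
proof (intro conjI allI impI)
  show "\<exists>g :: real ^ 'n \<Rightarrow> (int ^ 'n, 'a) compl. mult_triv A g"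
    using gcan_triv by blast
next
  fix g g' :: "real ^ 'n \<Rightarrow> (int ^ 'n, 'a) compl" and v :: "real ^ 'n"
  assume g: "mult_triv A g" and g': "mult_triv A g'" and TA: "TA A v"
  have NA: "tord v > 0" "unitA (of_nat (tord v) :: 'a)" using TA_D[OF TA] by auto
  have m: "real (tord v) *\<^sub>R v = ivec (lof v)" using lof[OF TA] by simp
  show "g v \<approx> g' v"
    by (rule root_unique[OF NA(2) key_g[OF g TA NA(1) m] key_g[OF g' TA NA(1) m]])
next
  fix f :: "int ^ 'n \<Rightarrow> int ^ 'm" and g :: "real ^ 'n \<Rightarrow> (int ^ 'n, 'a) compl"
    and g' :: "real ^ 'm \<Rightarrow> (int ^ 'm, 'a) compl" and v :: "real ^ 'n"
  assume iso: "isogeny f" and deg: "unitA (of_nat (isog_deg f) :: 'a)"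
    and g: "mult_triv A g" and g': "mult_triv A g'" and TA: "TA A v"
  have f: "\<And>x y. f (x + y) = f x + f y" using iso by (simp add: isogeny_def)
  define N where "N = tord v"
  have NA: "N > 0" "unitA (of_nat N :: 'a)" using TA_D[OF TA] by (auto simp: N_def)
  have m: "real N *\<^sub>R v = ivec (lof v)" using lof[OF TA] by (simp add: N_def)
  have m': "real N *\<^sub>R phiV f v = ivec (f (lof v))"
    by (simp add: phiV_scale[symmetric] m phiV_ivec[OF f])
  have TA': "TA A (phiV f v)" by (rule TA_intro[OF NA(1) _ NA(2)]) (simp add: m')
  have R1: "Rt (g' (phiV f v)) N (delta (- f (lof v)))" by (rule key_g[OF g' TA' NA(1) m'])
  have R2: "Rt (phiR f (g v)) N (phiA f (delta (- lof v)))"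
    by (rule Rt_phi[OF f key_g[OF g TA NA(1) m]])
  have "phiA f (delta (- lof v)) = (delta (- f (lof v)) :: (int ^ 'm, 'a) grpring)"
    by (simp add: phiA_delta additive_uminus[of f, OF f])
  then show "g' (phiV f v) \<approx> phiR f (g v)"
    using root_unique[OF NA(2) R1] R2 by simp
next
  fix g :: "real ^ 'n \<Rightarrow> (int ^ 'n, 'a) compl" and N :: nat and v :: "real ^ 'n" and l :: "int ^ 'n"
  assume g: "mult_triv A g" and Np: "N > 0" and NA: "unitA (of_nat N :: 'a)"
    and m: "real N *\<^sub>R v = ivec l"
  have TA: "TA A v" by (rule TA_intro[OF Np _ NA]) (simp add: m)
  have f: "\<And>x y. of_nat N * (x + y) = of_nat N * x + of_nat N * (y :: int ^ 'n)"
    by (simp add: distrib_left)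
  have R1: "Rt (phiR (\<lambda>x. of_nat N * x) (g v)) N (phiA (\<lambda>x. of_nat N * x) (delta (- l)))"
    by (rule Rt_phi[OF f key_g[OF g TA Np m]])
  have R2: "Rt (cemb (delta (- l))) N (delta (- l) ^ N)" by (rule Rt_delta)
  have "phiA (\<lambda>x. of_nat N * x) (delta (- l)) = (delta (- l) ^ N :: (int ^ 'n, 'a) grpring)"
    by (simp add: phiA_delta delta_power)
  then show "phiR (\<lambda>x. of_nat N * x) (g v) \<approx> cemb (delta (- l))"
    using root_unique[OF NA R1] R2 by simp
qed


end
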